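(* Consider the two-unicast wireline network ("butterfly network with co-located sinks") with nodes $\mathsf{S}_1,\mathsf{S}_2,\mathsf{M}_1,\mathsf{M}_2,\mathsf{D}$, where the single destination node $\mathsf{D}$ must decode both $W_1$ (from $\mathsf{S}_1$) and $W_2$ (from $\mathsf{S}_2$), and directed edges: edge 1 from $\mathsf{S}_1$ to $\mathsf{M}_1$, edge 2 from $\mathsf{S}_2$ to $\mathsf{M}_1$, edge 3 from $\mathsf{M}_1$ to $\mathsf{M}_2$, edge 4 from $\mathsf{S}_1$ to $\mathsf{D}$, edge 5 from $\mathsf{S}_2$ to $\mathsf{D}$, and one edge from $\mathsf{M}_2$ to $\mathsf{D}$ of capacity $\mathsf{C}_6+\mathsf{C}_7$, where edge $i$ has capacity $\mathsf{C}_i\ge0$ and $\mathsf{C}_6,\mathsf{C}_7\ge0$. Then every nonnegative rate pair $(R_1,R_2)$ satisfying $$R_1\le \mathsf{C}_1+\min\{R_1,\mathsf{C}_4\},\quad R_2\le \mathsf{C}_2+\min\{R_2,\mathsf{C}_5\},$$ $$R_1+R_2\le \min\{\mathsf{C}_3,\mathsf{C}_6+\mathsf{C}_7\}+\min\{R_2,\mathsf{C}_5\}+\min\{R_1,\mathsf{C}_4\}$$ is achievable (without security constraints).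
   Context: Network model: a directed acyclic graph; each edge $e$ is a noiseless orthogonal channel of capacity $\mathsf{C}_e$ carrying symbols over $\mathbb{F}_q$; over $n$ channel uses edge $e$ carries $X_e^n$, received as $Y_e^n=X_e^n$. Source $\mathsf{S}_i$ has message $W_i$ (uniform, $q$-ary entropy $nR_i$, $W_1,W_2$ independent). A rate pair is achievable if for some block length $n$ there are encoding functions—an edge leaving $\mathsf{S}_i$ carries a function of $W_i$, any other edge a function of the symbols received on the incoming edges of its tail—and decoding functions at $\mathsf{D}$ (functions of the symbols on its incoming edges) recovering both $W_1$ and $W_2$ with vanishing error probability. *)

theory Defs
  imports Complex_Main "HOL-Computational_Algebra.Primes"
begin

text \<open>
Over a block of n channel uses, an edge of capacity C carries
floor(n*C) q-ary symbols, i.e. one value of the set {0..<q^floor(n*C)}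
(a word of floor(n*C) q-ary symbols, encoded as a natural number).
Message W_i is uniform on {0..<M_i}; messages are independent.
\<close>

definition edge_syms :: "nat \<Rightarrow> real \<Rightarrow> nat" where
  "edge_syms n C = nat \<lfloor>real n * C\<rfloor>"

definition in_alph :: "nat \<Rightarrow> nat \<Rightarrow> real \<Rightarrow> nat \<Rightarrow> bool" where
  "in_alph q n C x \<longleftrightarrow> x < q ^ edge_syms n C"

definition butterfly_code ::
  "nat \<Rightarrow> real \<Rightarrow> real \<Rightarrow> real \<Rightarrow> real \<Rightarrow> real \<Rightarrow> real \<Rightarrow> real \<Rightarrow>
   nat \<Rightarrow> nat \<Rightarrow> nat \<Rightarrow>
   (nat \<Rightarrow> nat) \<Rightarrow> (nat \<Rightarrow> nat) \<Rightarrow> (nat \<Rightarrow> nat \<Rightarrow> nat) \<Rightarrow>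
   (nat \<Rightarrow> nat) \<Rightarrow> (nat \<Rightarrow> nat) \<Rightarrow> (nat \<Rightarrow> nat) \<Rightarrow>
   (nat \<Rightarrow> nat \<Rightarrow> nat \<Rightarrow> nat) \<Rightarrow> (nat \<Rightarrow> nat \<Rightarrow> nat \<Rightarrow> nat) \<Rightarrow> bool" where
  "butterfly_code q C1 C2 C3 C4 C5 C6 C7 n M1 M2 f1 f2 f3 f4 f5 f6 g1 g2 \<longleftrightarrow>
     (\<forall>w1<M1. in_alph q n C1 (f1 w1) \<and> in_alph q n C4 (f4 w1)) \<and>
     (\<forall>w2<M2. in_alph q n C2 (f2 w2) \<and> in_alph q n C5 (f5 w2)) \<and>
     (\<forall>x1 x2. in_alph q n C1 x1 \<longrightarrow> in_alph q n C2 x2 \<longrightarrow> in_alph q n C3 (f3 x1 x2)) \<and>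
     (\<forall>x3. in_alph q n C3 x3 \<longrightarrow> in_alph q n (C6 + C7) (f6 x3))"

definition butterfly_errors ::
  "nat \<Rightarrow> nat \<Rightarrow>
   (nat \<Rightarrow> nat) \<Rightarrow> (nat \<Rightarrow> nat) \<Rightarrow> (nat \<Rightarrow> nat \<Rightarrow> nat) \<Rightarrow>
   (nat \<Rightarrow> nat) \<Rightarrow> (nat \<Rightarrow> nat) \<Rightarrow> (nat \<Rightarrow> nat) \<Rightarrow>
   (nat \<Rightarrow> nat \<Rightarrow> nat \<Rightarrow> nat) \<Rightarrow> (nat \<Rightarrow> nat \<Rightarrow> nat \<Rightarrow> nat) \<Rightarrow> nat" where
  "butterfly_errors M1 M2 f1 f2 f3 f4 f5 f6 g1 g2 =
     card {(w1, w2). w1 < M1 \<and> w2 < M2 \<and>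
        (let y4 = f4 w1; y5 = f5 w2; y6 = f6 (f3 (f1 w1) (f2 w2))
         in g1 y4 y5 y6 \<noteq> w1 \<or> g2 y4 y5 y6 \<noteq> w2)}"

definition butterfly_achievable ::
  "nat \<Rightarrow> real \<Rightarrow> real \<Rightarrow> real \<Rightarrow> real \<Rightarrow> real \<Rightarrow> real \<Rightarrow> real \<Rightarrow> real \<Rightarrow> real \<Rightarrow> bool" where
  "butterfly_achievable q C1 C2 C3 C4 C5 C6 C7 R1 R2 \<longleftrightarrow>
     (\<forall>\<epsilon>>0. \<exists>n M1 M2 f1 f2 f3 f4 f5 f6 g1 g2.
        n > 0 \<and> M1 > 0 \<and> M2 > 0 \<and>
        log (real q) (real M1) \<ge> real n * (R1 - \<epsilon>) \<and>
        log (real q) (real M2) \<ge> real n * (R2 - \<epsilon>) \<and>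
        butterfly_code q C1 C2 C3 C4 C5 C6 C7 n M1 M2 f1 f2 f3 f4 f5 f6 g1 g2 \<and>
        real (butterfly_errors M1 M2 f1 f2 f3 f4 f5 f6 g1 g2)
          \<le> \<epsilon> * (real M1 * real M2))"

end

theory Submission
  imports Defs
begin

lemma mix_bound:
  fixes a b A B :: nat
  assumes "a < A" "b < B"
  shows "a + A * b < A * B"
proof -
  have "b + 1 \<le> B" using assms by simp
  hence "A * (b + 1) \<le> A * B" by (rule mult_le_mono2)
  thus ?thesis using assms by (simp add: algebra_simps)
qed

lemma alph_mono:
  assumes "(q::nat) \<ge> 1" "x < q ^ l" "l \<le> e"
  shows "x < q ^ e"
  using assms power_increasing[of l e q] by linarith

lemma code_exists:
  fixes q :: nat
  assumes q: "q \<ge> 2"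
    and h4: "k1 \<le> edge_syms n C4" and h1: "l1 \<le> edge_syms n C1"
    and h5: "k2 \<le> edge_syms n C5" and h2: "l2 \<le> edge_syms n C2"
    and h3: "l1 + l2 \<le> edge_syms n C3" and h6: "l1 + l2 \<le> edge_syms n (C6 + C7)"
  shows "\<exists>f1 f2 f3 f4 f5 f6 g1 g2.
     butterfly_code q C1 C2 C3 C4 C5 C6 C7 n (q^(k1+l1)) (q^(k2+l2)) f1 f2 f3 f4 f5 f6 g1 g2 \<and>
     butterfly_errors (q^(k1+l1)) (q^(k2+l2)) f1 f2 f3 f4 f5 f6 g1 g2 = 0"
proof -
  have q1: "q \<ge> 1" using q by simp
  have pos: "\<And>m. (0::nat) < q ^ m" using q by simp
  define f1 where "f1 = (\<lambda>w::nat. w div q^k1)"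
  define f4 where "f4 = (\<lambda>w::nat. w mod q^k1)"
  define f2 where "f2 = (\<lambda>w::nat. w div q^k2)"
  define f5 where "f5 = (\<lambda>w::nat. w mod q^k2)"
  define f3 where "f3 = (\<lambda>(x::nat) (y::nat). x mod q^l1 + q^l1 * (y mod q^l2))"
  define f6 where "f6 = (\<lambda>x::nat. x mod q^(l1+l2))"
  define g1 where "g1 = (\<lambda>(y4::nat) (y5::nat) (y6::nat). y4 + q^k1 * (y6 mod q^l1))"
  define g2 where "g2 = (\<lambda>(y4::nat) (y5::nat) (y6::nat). y5 + q^k2 * (y6 div q^l1))"
  have f3b: "f3 x y < q^(l1+l2)" for x y
    unfolding f3_def power_add
    by (rule mix_bound) (rule mod_less_divisor, rule pos)+
  have code: "butterfly_code q C1 C2 C3 C4 C5 C6 C7 n (q^(k1+l1)) (q^(k2+l2)) f1 f2 f3 f4 f5 f6 g1 g2"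
    unfolding butterfly_code_def in_alph_def
  proof (intro conjI allI impI)
    fix w1 assume w: "w1 < q^(k1+l1)"
    have "w1 div q^k1 < q^l1" using w by (simp add: less_mult_imp_div_less power_add mult.commute)
    thus "f1 w1 < q ^ edge_syms n C1" unfolding f1_def using alph_mono[OF q1 _ h1] by blast
    have "w1 mod q^k1 < q^k1" using pos by simp
    thus "f4 w1 < q ^ edge_syms n C4" unfolding f4_def using alph_mono[OF q1 _ h4] by blast
  next
    fix w2 assume w: "w2 < q^(k2+l2)"
    have "w2 div q^k2 < q^l2" using w by (simp add: less_mult_imp_div_less power_add mult.commute)
    thus "f2 w2 < q ^ edge_syms n C2" unfolding f2_def using alph_mono[OF q1 _ h2] by blast
    have "w2 mod q^k2 < q^k2" using pos by simp
    thus "f5 w2 < q ^ edge_syms n C5" unfolding f5_def using alph_mono[OF q1 _ h5] by blast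
  next
    fix x1 x2
    show "f3 x1 x2 < q ^ edge_syms n C3" using alph_mono[OF q1 f3b h3] .
  next
    fix x3
    have "f6 x3 < q^(l1+l2)" unfolding f6_def by (rule mod_less_divisor, rule pos)
    thus "f6 x3 < q ^ edge_syms n (C6 + C7)" using alph_mono[OF q1 _ h6] by blast
  qed
  have dec: "g1 (f4 w1) (f5 w2) (f6 (f3 (f1 w1) (f2 w2))) = w1 \<and>
             g2 (f4 w1) (f5 w2) (f6 (f3 (f1 w1) (f2 w2))) = w2"
    if w1: "w1 < q^(k1+l1)" and w2: "w2 < q^(k2+l2)" for w1 w2
  proof -
    have d1: "w1 div q^k1 < q^l1" using w1 by (simp add: less_mult_imp_div_less power_add mult.commute)
    have d2: "w2 div q^k2 < q^l2" using w2 by (simp add: less_mult_imp_div_less power_add mult.commute)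
    have e: "f6 (f3 (f1 w1) (f2 w2)) = f3 (f1 w1) (f2 w2)" unfolding f6_def using f3b by simp
    have f3e: "f3 (f1 w1) (f2 w2) = w1 div q^k1 + q^l1 * (w2 div q^k2)"
      unfolding f3_def f1_def f2_def using d1 d2 by simp
    have m: "(w1 div q^k1 + q^l1 * (w2 div q^k2)) mod q^l1 = w1 div q^k1" using d1 by simp
    have dv: "(w1 div q^k1 + q^l1 * (w2 div q^k2)) div q^l1 = w2 div q^k2" using d1 pos by simp
    show ?thesis unfolding g1_def g2_def e unfolding f3e m dv f4_def f5_def
      by (metis mod_mult_div_eq)
  qed
  have "{(w1, w2). w1 < q^(k1+l1) \<and> w2 < q^(k2+l2) \<and>
        (let y4 = f4 w1; y5 = f5 w2; y6 = f6 (f3 (f1 w1) (f2 w2))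
         in g1 y4 y5 y6 \<noteq> w1 \<or> g2 y4 y5 y6 \<noteq> w2)} = {}"
    unfolding Let_def using dec by blast
  hence "butterfly_errors (q^(k1+l1)) (q^(k2+l2)) f1 f2 f3 f4 f5 f6 g1 g2 = 0"
    unfolding butterfly_errors_def by (simp only: card.empty)
  with code show ?thesis by blast
qed

lemma nat_floor_add_le:
  fixes x y z :: real
  assumes "x \<ge> 0" "y \<ge> 0" "x + y \<le> z"
  shows "nat \<lfloor>x\<rfloor> + nat \<lfloor>y\<rfloor> \<le> nat \<lfloor>z\<rfloor>"
proof -
  have "\<lfloor>x\<rfloor> + \<lfloor>y\<rfloor> \<le> \<lfloor>x + y\<rfloor>" by (rule le_floor_add)
  also have "\<dots> \<le> \<lfloor>z\<rfloor>" using assms(3) by (rule floor_mono)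
  finally show ?thesis using assms by (simp add: nat_add_distrib[symmetric] nat_mono)
qed

lemma nat_floor_ge:
  fixes x :: real
  assumes "x \<ge> 0"
  shows "real (nat \<lfloor>x\<rfloor>) \<ge> x - 1"
  using assms by (simp add: of_nat_nat)

theorem theorem5:
  fixes q :: nat and C1 C2 C3 C4 C5 C6 C7 R1 R2 :: real
  assumes "\<exists>p k. prime p \<and> k > 0 \<and> q = p ^ k"
    and "C1 \<ge> 0" "C2 \<ge> 0" "C3 \<ge> 0" "C4 \<ge> 0" "C5 \<ge> 0" "C6 \<ge> 0" "C7 \<ge> 0"
    and "R1 \<ge> 0" "R2 \<ge> 0"
    and "R1 \<le> C1 + min R1 C4"
    and "R2 \<le> C2 + min R2 C5"
    and "R1 + R2 \<le> min C3 (C6 + C7) + min R2 C5 + min R1 C4"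
  shows "butterfly_achievable q C1 C2 C3 C4 C5 C6 C7 R1 R2"
  unfolding butterfly_achievable_def
proof (intro allI impI)
  fix eps :: real assume eps: "eps > 0"
  obtain p k where pk: "prime p" "k > 0" "q = p ^ k" using assms(1) by blast
  have p2: "p \<ge> 2" using pk(1) by (simp add: prime_ge_2_nat)
  have "p \<le> p ^ k" using pk(2) p2 by (simp add: self_le_power)
  hence q: "q \<ge> 2" using p2 pk(3) by simp
  define a where "a = min R1 C4"
  define b where "b = min R2 C5"
  define n :: nat where "n = nat \<lceil>2 / eps\<rceil> + 1"
  have npos: "n > 0" unfolding n_def by simp
  have "real n > 2 / eps" unfolding n_def by linarith
  hence neps: "real n * eps > 2" using eps by (simp add: field_simps)
  define k1 where "k1 = nat \<lfloor>real n * a\<rfloor>"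
  define l1 where "l1 = nat \<lfloor>real n * (R1 - a)\<rfloor>"
  define k2 where "k2 = nat \<lfloor>real n * b\<rfloor>"
  define l2 where "l2 = nat \<lfloor>real n * (R2 - b)\<rfloor>"
  have a0: "a \<ge> 0" "R1 - a \<ge> 0" "a \<le> C4" "R1 - a \<le> C1" unfolding a_def using assms by auto
  have b0: "b \<ge> 0" "R2 - b \<ge> 0" "b \<le> C5" "R2 - b \<le> C2" unfolding b_def using assms by auto
  have s: "(R1 - a) + (R2 - b) \<le> C3" "(R1 - a) + (R2 - b) \<le> C6 + C7"
    using assms(13) unfolding a_def b_def by auto
  have nn: "real n \<ge> 0" by simp
  have mono: "nat \<lfloor>real n * x\<rfloor> \<le> edge_syms n y" if "x \<le> y" for x y
    unfolding edge_syms_def by (intro nat_mono floor_mono mult_left_mono that nn)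
  have h4: "k1 \<le> edge_syms n C4" unfolding k1_def using a0 by (intro mono) auto
  have h1: "l1 \<le> edge_syms n C1" unfolding l1_def using a0 by (intro mono) auto
  have h5: "k2 \<le> edge_syms n C5" unfolding k2_def using b0 by (intro mono) auto
  have h2: "l2 \<le> edge_syms n C2" unfolding l2_def using b0 by (intro mono) auto
  have sum: "l1 + l2 \<le> edge_syms n z" if "(R1 - a) + (R2 - b) \<le> z" for z
    unfolding l1_def l2_def edge_syms_def
  proof (rule nat_floor_add_le)
    show "0 \<le> real n * (R1 - a)" "0 \<le> real n * (R2 - b)" using a0 b0 by simp_all
    have "real n * ((R1 - a) + (R2 - b)) \<le> real n * z" using that nn by (rule mult_left_mono)
    thus "real n * (R1 - a) + real n * (R2 - b) \<le> real n * z" by (simp add: distrib_left)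
  qed
  have h3: "l1 + l2 \<le> edge_syms n C3" using sum s by blast
  have h6: "l1 + l2 \<le> edge_syms n (C6 + C7)" using sum s by blast
  obtain f1 f2 f3 f4 f5 f6 g1 g2 where code:
    "butterfly_code q C1 C2 C3 C4 C5 C6 C7 n (q^(k1+l1)) (q^(k2+l2)) f1 f2 f3 f4 f5 f6 g1 g2"
    "butterfly_errors (q^(k1+l1)) (q^(k2+l2)) f1 f2 f3 f4 f5 f6 g1 g2 = 0"
    using code_exists[OF q h4 h1 h5 h2 h3 h6] by blast
  have lg: "log (real q) (real (q ^ m)) = real m" for m
    using q by (simp add: log_nat_power)
  have r1: "real (k1 + l1) \<ge> real n * (R1 - eps)"
  proof -
    have "real k1 \<ge> real n * a - 1" unfolding k1_def using a0 by (intro nat_floor_ge) simp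
    moreover have "real l1 \<ge> real n * (R1 - a) - 1" unfolding l1_def using a0 by (intro nat_floor_ge) simp
    ultimately show ?thesis using neps by (simp add: algebra_simps)
  qed
  have r2: "real (k2 + l2) \<ge> real n * (R2 - eps)"
  proof -
    have "real k2 \<ge> real n * b - 1" unfolding k2_def using b0 by (intro nat_floor_ge) simp
    moreover have "real l2 \<ge> real n * (R2 - b) - 1" unfolding l2_def using b0 by (intro nat_floor_ge) simp
    ultimately show ?thesis using neps by (simp add: algebra_simps)
  qed
  have qp: "\<And>m. q ^ m > 0" using q by simp
  show "\<exists>n M1 M2 f1 f2 f3 f4 f5 f6 g1 g2.
        n > 0 \<and> M1 > 0 \<and> M2 > 0 \<and>
        log (real q) (real M1) \<ge> real n * (R1 - eps) \<and>
        log (real q) (real M2) \<ge> real n * (R2 - eps) \<and>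
        butterfly_code q C1 C2 C3 C4 C5 C6 C7 n M1 M2 f1 f2 f3 f4 f5 f6 g1 g2 \<and>
        real (butterfly_errors M1 M2 f1 f2 f3 f4 f5 f6 g1 g2)
          \<le> eps * (real M1 * real M2)"
    apply (rule exI[of _ n], rule exI[of _ "q^(k1+l1)"], rule exI[of _ "q^(k2+l2)"])
    apply (rule exI[of _ f1], rule exI[of _ f2], rule exI[of _ f3], rule exI[of _ f4])
    apply (rule exI[of _ f5], rule exI[of _ f6], rule exI[of _ g1], rule exI[of _ g2])
    using npos q lg r1 r2 code eps by simp
qed

end
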